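(* Let $P,Q\in\mathbb P_d$ and let $R=\gamma^{\mathrm{BW}}_{PQ}(t)$ for some $t\in[0,1]$. Then $\operatorname{F}_R(P,Q)=\operatorname{F}^{\mathrm U}(P,Q)$.
   Context: $\mathbb P_d$ is the set of $d\times d$ complex positive definite matrices; $A\#B:=A^{1/2}(A^{-1/2}BA^{-1/2})^{1/2}A^{1/2}$ is the matrix geometric mean. The Bures–Wasserstein geodesic between $A,B\in\mathbb P_d$ is $\gamma^{\mathrm{BW}}_{AB}(t):=[(1-t)\mathbb I+t\,A^{-1}\#B]\,A\,[(1-t)\mathbb I+t\,A^{-1}\#B]$, $t\in[0,1]$. The generalized fidelity is $\operatorname{F}_R(P,Q):=\operatorname{Tr}\big[\sqrt{R^{1/2}PR^{1/2}}\,R^{-1}\sqrt{R^{1/2}QR^{1/2}}\big]$, and the Uhlmann fidelity is $\operatorname{F}^{\mathrm U}(P,Q):=\operatorname{Tr}\sqrt{P^{1/2}QP^{1/2}}$. *)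

theory Defs
  imports "HOL-Analysis.Analysis"
begin

text \<open>Complex d x d matrices are modelled as complex^'n^'n with d = CARD('n).\<close>

definition cadjoint :: "complex^'n^'n \<Rightarrow> complex^'n^'n" where
  "cadjoint A = (\<chi> i j. cnj (A $ j $ i))"

definition hermitian_mat :: "complex^'n^'n \<Rightarrow> bool" where
  "hermitian_mat A \<longleftrightarrow> cadjoint A = A"

definition qform :: "complex^'n^'n \<Rightarrow> complex^'n \<Rightarrow> complex" where
  "qform A x = (\<Sum>i\<in>UNIV. cnj (x $ i) * ((A *v x) $ i))"

definition pos_def :: "complex^'n^'n \<Rightarrow> bool" where
  "pos_def A \<longleftrightarrow> hermitian_mat A \<and> (\<forall>x. x \<noteq> 0 \<longrightarrow> 0 < Re (qform A x))"

definition pos_semidef :: "complex^'n^'n \<Rightarrow> bool" where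
  "pos_semidef A \<longleftrightarrow> hermitian_mat A \<and> (\<forall>x. 0 \<le> Re (qform A x))"

definition msqrt :: "complex^'n^'n \<Rightarrow> complex^'n^'n" where
  "msqrt A = (THE B. pos_semidef B \<and> B ** B = A)"

definition gmean :: "complex^'n^'n \<Rightarrow> complex^'n^'n \<Rightarrow> complex^'n^'n" where
  "gmean A B = msqrt A ** msqrt (matrix_inv (msqrt A) ** B ** matrix_inv (msqrt A)) ** msqrt A"

definition bw_geodesic :: "complex^'n^'n \<Rightarrow> complex^'n^'n \<Rightarrow> real \<Rightarrow> complex^'n^'n" where
  "bw_geodesic A B t =
     (let M = (1 - t) *\<^sub>R mat 1 + t *\<^sub>R gmean (matrix_inv A) B in M ** A ** M)"

definition gen_fidelity :: "complex^'n^'n \<Rightarrow> complex^'n^'n \<Rightarrow> complex^'n^'n \<Rightarrow> complex" where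
  "gen_fidelity R P Q =
     trace (msqrt (msqrt R ** P ** msqrt R) ** matrix_inv R ** msqrt (msqrt R ** Q ** msqrt R))"

definition uhlmann_fidelity :: "complex^'n^'n \<Rightarrow> complex^'n^'n \<Rightarrow> complex" where
  "uhlmann_fidelity P Q = trace (msqrt (msqrt P ** Q ** msqrt P))"

end

theory Submission
  imports Defs
begin

definition cinner :: "complex^'n \<Rightarrow> complex^'n \<Rightarrow> complex" where
  "cinner x y = (\<Sum>i\<in>UNIV. cnj (x$i) * y$i)"

lemma vscaleR_nth[simp]: "((c::real) *\<^sub>R (x::complex^'n)) $ i = of_real c * x $ i"
  by (simp only: vector_scaleR_component) (simp add: scaleR_conv_of_real)
lemma mscaleR_nth[simp]: "((c::real) *\<^sub>R (A::complex^'n^'m)) $ i $ j = of_real c * A $ i $ j"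
  by (simp only: vector_scaleR_component) (simp add: scaleR_conv_of_real)

lemma qform_cinner: "qform A x = cinner x (A *v x)"
  by (simp add: qform_def cinner_def)

lemma cinner_add_left: "cinner (x + y) z = cinner x z + cinner y z"
  by (simp add: cinner_def distrib_right sum.distrib)
lemma cinner_add_right: "cinner x (y + z) = cinner x y + cinner x z"
  by (simp add: cinner_def distrib_left sum.distrib)
lemma cinner_diff_right: "cinner x (y - z) = cinner x y - cinner x z"
  by (simp add: cinner_def right_diff_distrib sum_subtractf)
lemma cinner_smult_left: "cinner (c *s x) y = cnj c * cinner x y"
  by (simp add: cinner_def sum_distrib_left algebra_simps)
lemma cinner_smult_right: "cinner x (c *s y) = c * cinner x y"
  by (simp add: cinner_def sum_distrib_left algebra_simps)
lemma cinner_scaleR_left: "cinner (c *\<^sub>R x) y = of_real c * cinner x y"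
  unfolding cinner_def vscaleR_nth complex_cnj_mult complex_cnj_complex_of_real sum_distrib_left
  by (intro sum.cong refl) (simp only: mult_ac)
lemma cinner_scaleR_right: "cinner x (c *\<^sub>R y) = of_real c * cinner x y"
  unfolding cinner_def vscaleR_nth sum_distrib_left
  by (intro sum.cong refl) (simp only: mult_ac)
lemma cinner_zero_left[simp]: "cinner 0 y = 0" by (simp add: cinner_def)
lemma cinner_zero_right[simp]: "cinner x 0 = 0" by (simp add: cinner_def)
lemma cinner_cnj: "cnj (cinner x y) = cinner y x"
  by (simp add: cinner_def mult.commute)

lemma cinner_re_inner: "Re (cinner x y) = inner x y"
  by (simp add: cinner_def inner_vec_def inner_complex_def Re_sum)

lemma cinner_self_real: "cinner x x = of_real (inner x x)"
proof -
  have "Im (cinner x x) = 0"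
    by (simp add: cinner_def Im_sum algebra_simps)
  then show ?thesis using cinner_re_inner[of x x] by (simp add: complex_eq_iff)
qed

lemma cinner_self_eq0: "cinner x x = 0 \<longleftrightarrow> x = 0"
  by (simp add: cinner_self_real)

lemma Re_cinner_self_ge0: "0 \<le> Re (cinner x x)"
  by (simp add: cinner_re_inner)

lemma cadjoint_mult: "cadjoint (A ** B) = cadjoint B ** cadjoint A"
  by (simp add: cadjoint_def matrix_matrix_mult_def vec_eq_iff mult.commute)
lemma cadjoint_cadjoint[simp]: "cadjoint (cadjoint A) = A"
  by (simp add: cadjoint_def vec_eq_iff)
lemma cadjoint_add: "cadjoint (A + B) = cadjoint A + cadjoint B"
  by (simp add: cadjoint_def vec_eq_iff)
lemma cadjoint_diff: "cadjoint (A - B) = cadjoint A - cadjoint B"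
  by (simp add: cadjoint_def vec_eq_iff)
lemma cadjoint_scaleR: "cadjoint (c *\<^sub>R A) = c *\<^sub>R cadjoint A"
  by (simp add: cadjoint_def vec_eq_iff)
lemma cadjoint_mat[simp]: "cadjoint (mat k) = mat (cnj k)"
  by (simp add: cadjoint_def vec_eq_iff mat_def)

lemma cinner_adjoint: "cinner x (A *v y) = cinner (cadjoint A *v x) y"
  apply (simp add: cinner_def cadjoint_def matrix_vector_mult_def sum_distrib_left sum_distrib_right)
  apply (subst sum.swap)
  apply (simp add: algebra_simps)
  done

lemma hermitian_cinner: "hermitian_mat A \<Longrightarrow> cinner x (A *v y) = cinner (A *v x) y"
  by (metis cinner_adjoint hermitian_mat_def)

lemma matrix_vector_smult: "(A::complex^'n^'m) *v (c *s x) = c *s (A *v x)"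
  unfolding matrix_vector_mult_def vec_eq_iff vector_smult_component vec_lambda_beta sum_distrib_left
  by (intro allI sum.cong refl) (simp only: mult_ac)

lemma quad_zero:
  fixes a q :: real
  assumes "\<And>s. 2 * s * a + s^2 * q \<le> 0"
  shows "a = 0"
proof -
  define k where "k = \<bar>q\<bar> + 1"
  have k: "k \<ge> 1" by (simp add: k_def)
  have "2*(a/k)*a + (a/k)^2*q \<le> 0" using assms .
  then have "k^2 * (2*(a/k)*a + (a/k)^2*q) \<le> 0"
    by (simp add: mult_nonneg_nonpos)
  also have "k^2 * (2*(a/k)*a + (a/k)^2*q) = a^2 * (2*k + q)"
    using k by (simp add: field_simps power2_eq_square)
  finally have "a^2 * (2*k + q) \<le> 0" .
  moreover have "2*k + q > 0" unfolding k_def by (simp add: abs_if)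
  ultimately have "a^2 \<le> 0" by (simp add: mult_le_0_iff)
  then show ?thesis by simp
qed

lemma qform_expand:
  fixes K :: "complex^'n^'n"
  assumes "hermitian_mat K"
  shows "Re (qform K (v + of_real s *s y)) = Re (qform K v) + 2 * s * Re (cinner y (K *v v)) + s^2 * Re (qform K y)"
proof -
  have "qform K (v + of_real s *s y) = cinner v (K *v v) + of_real s * cinner v (K *v y)
      + of_real s * cinner y (K *v v) + of_real s * of_real s * cinner y (K *v y)"
    by (simp add: qform_cinner matrix_vector_right_distrib matrix_vector_smult cinner_add_left
        cinner_add_right cinner_smult_left cinner_smult_right algebra_simps)
  moreover have "cinner v (K *v y) = cnj (cinner y (K *v v))"
    using hermitian_cinner[OF assms, of v y] cinner_cnj by metis
  ultimately show ?thesis by (simp add: qform_cinner power2_eq_square)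
qed

lemma herm_max_zero:
  fixes K :: "complex^'n^'n"
  assumes K: "hermitian_mat K" and v: "v \<in> W"
    and cl1: "\<And>x y s. x\<in>W \<Longrightarrow> y\<in>W \<Longrightarrow> x + (of_real s) *s y \<in> W"
    and cl2: "\<And>y. y \<in> W \<Longrightarrow> \<i> *s y \<in> W"
    and le: "\<And>x. x\<in>W \<Longrightarrow> Re (qform K x) \<le> 0"
    and eq: "Re (qform K v) = 0" and y: "y \<in> W"
  shows "cinner y (K *v v) = 0"
proof -
  have H: "Re (cinner z (K *v v)) = 0" if z: "z \<in> W" for z
  proof (rule quad_zero[where q = "Re (qform K z)"])
    fix s :: real
    have "Re (qform K (v + of_real s *s z)) \<le> 0" using le cl1[OF v z] by blast
    then show "2 * s * Re (cinner z (K *v v)) + s\<^sup>2 * Re (qform K z) \<le> 0"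
      using qform_expand[OF K, of v s z] eq by simp
  qed
  have 1: "Re (cinner y (K *v v)) = 0" using H y .
  have "Re (cinner (\<i> *s y) (K *v v)) = 0" using H cl2[OF y] .
  then have 2: "Im (cinner y (K *v v)) = 0" by (simp add: cinner_smult_left)
  show ?thesis using 1 2 by (simp add: complex_eq_iff)
qed

lemma psd_kernel:
  fixes A :: "complex^'n^'n"
  assumes "pos_semidef A" "Re (qform A x) = 0"
  shows "A *v x = 0"
proof -
  have h: "hermitian_mat (- A)" using assms(1)
    by (simp add: pos_semidef_def hermitian_mat_def cadjoint_def vec_eq_iff)
  have q: "qform (- A) z = - qform A z" for z
    by (simp add: qform_def matrix_vector_mult_def sum_negf)
  have "cinner (A *v x) ((- A) *v x) = 0"
    by (rule herm_max_zero[OF h, of x UNIV]) (use assms in \<open>auto simp: q pos_semidef_def\<close>)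
  moreover have "(- A) *v x = - (A *v x)"
    by (simp add: matrix_vector_mult_def vec_eq_iff sum_negf)
  ultimately have "cinner (A *v x) (A *v x) = 0"
    by (simp add: cinner_def sum_negf)
  then show ?thesis by (simp add: cinner_self_eq0)
qed

lemma inv_props:
  fixes A :: "complex^'n^'n"
  assumes "invertible A"
  shows "A ** matrix_inv A = mat 1" "matrix_inv A ** A = mat 1"
proof -
  have "A ** matrix_inv A = mat 1 \<and> matrix_inv A ** A = mat 1"
    using assms unfolding invertible_def matrix_inv_def by (rule someI_ex)
  then show "A ** matrix_inv A = mat 1" "matrix_inv A ** A = mat 1" by auto
qed

lemma inv_unique:
  fixes A B :: "complex^'n^'n"
  assumes "A ** B = mat 1"
  shows "matrix_inv A = B"
proof -
  have i: "invertible A" using assms invertible_right_inverse by blast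
  have "matrix_inv A = matrix_inv A ** (A ** B)" by (simp add: assms)
  also have "\<dots> = B" by (simp add: matrix_mul_assoc inv_props[OF i])
  finally show ?thesis .
qed

lemma inv_unique_left:
  fixes A B :: "complex^'n^'n"
  assumes "B ** A = mat 1"
  shows "matrix_inv A = B"
  using assms inv_unique matrix_left_right_inverse by blast

lemma invertible_inv:
  fixes A :: "complex^'n^'n"
  assumes "invertible A"
  shows "invertible (matrix_inv A)"
  using inv_props[OF assms] invertible_def by blast

lemma inv_inv:
  fixes A :: "complex^'n^'n"
  assumes "invertible A"
  shows "matrix_inv (matrix_inv A) = A"
  using inv_props[OF assms] inv_unique by blast

lemma qform_add: "qform (A + B) x = qform A x + qform B x"
  by (simp add: qform_cinner matrix_vector_mult_add_rdistrib cinner_add_right)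

lemma qform_scaleR: "qform ((a::real) *\<^sub>R (A::complex^'n^'n)) x = of_real a * qform A x"
proof -
  have "(a *\<^sub>R A) *v x = a *\<^sub>R (A *v x)"
    by (simp add: vec_eq_iff matrix_vector_mult_def scaleR_sum_right)
  then show ?thesis by (simp add: qform_cinner cinner_scaleR_right)
qed

lemma qform_mat1: "qform (mat 1) x = cinner x x"
  by (simp add: qform_cinner)

lemma qform_cong: "qform (cadjoint B ** A ** B) x = qform A (B *v x)"
  by (simp add: qform_cinner cinner_adjoint matrix_vector_mul_assoc[symmetric])

lemma qform_zero[simp]: "qform A 0 = 0"
  by (simp add: qform_cinner)

lemma pd_psd: "pos_def A \<Longrightarrow> pos_semidef A"
  unfolding pos_def_def pos_semidef_def
  by (metis less_eq_real_def order_refl qform_zero zero_complex.sel(1))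

lemma pd_inj:
  fixes A :: "complex^'n^'n"
  assumes "pos_def A" "A *v x = 0"
  shows "x = 0"
  using assms unfolding pos_def_def qform_def by (auto simp: sum.neutral)

lemma pd_invertible:
  fixes A :: "complex^'n^'n"
  assumes "pos_def A"
  shows "invertible A"
proof -
  have "inj ((*v) A)"
  proof (rule injI)
    fix x y assume "A *v x = A *v y"
    then have "A *v (x - y) = 0" by (simp add: matrix_vector_mult_diff_distrib)
    then show "x = y" using pd_inj[OF assms] right_minus_eq by metis
  qed
  then show ?thesis using matrix_left_invertible_injective invertible_left_inverse by blast
qed

lemma hermitian_inv:
  fixes A :: "complex^'n^'n"
  assumes h: "hermitian_mat A" and i: "invertible A"
  shows "hermitian_mat (matrix_inv A)"
proof -
  have "cadjoint (matrix_inv A) ** A = mat 1"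
    using arg_cong[OF inv_props(1)[OF i], of cadjoint] h
    by (simp add: cadjoint_mult hermitian_mat_def)
  then show ?thesis unfolding hermitian_mat_def using inv_unique_left by metis
qed

lemma cong_pd:
  fixes A B :: "complex^'n^'n"
  assumes "pos_def A" "invertible B"
  shows "pos_def (cadjoint B ** A ** B)"
  unfolding pos_def_def
proof safe
  show "hermitian_mat (cadjoint B ** A ** B)"
    using assms(1) by (simp add: pos_def_def hermitian_mat_def cadjoint_mult matrix_mul_assoc)
  fix x :: "complex^'n" assume "x \<noteq> 0"
  then have "B *v x \<noteq> 0" using inj_matrix_vector_mult[OF assms(2)]
    by (metis injD matrix_vector_mult_0_right)
  then show "0 < Re (qform (cadjoint B ** A ** B) x)"
    using assms(1) by (simp add: qform_cong pos_def_def)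
qed

lemma cong_psd:
  fixes A B :: "complex^'n^'n"
  assumes "pos_semidef A"
  shows "pos_semidef (cadjoint B ** A ** B)"
  unfolding pos_semidef_def
proof safe
  show "hermitian_mat (cadjoint B ** A ** B)"
    using assms(1) by (simp add: pos_semidef_def hermitian_mat_def cadjoint_mult matrix_mul_assoc)
  fix x :: "complex^'n"
  show "0 \<le> Re (qform (cadjoint B ** A ** B) x)"
    using assms(1) by (simp add: qform_cong pos_semidef_def)
qed

lemma pd_inv:
  fixes A :: "complex^'n^'n"
  assumes "pos_def A"
  shows "pos_def (matrix_inv A)"
proof -
  have i: "invertible A" by (rule pd_invertible[OF assms])
  have h: "hermitian_mat (matrix_inv A)"
    using hermitian_inv assms i pos_def_def by blast
  have "cadjoint (matrix_inv A) ** A ** matrix_inv A = matrix_inv A"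
    using h by (simp add: hermitian_mat_def inv_props[OF i])
  then show ?thesis using cong_pd[OF assms invertible_inv[OF i]] by simp
qed

lemma pd_mat1: "pos_def (mat 1 :: complex^'n^'n)"
  by (simp add: pos_def_def hermitian_mat_def qform_mat1 cinner_re_inner)

lemma pd_comb:
  fixes A B :: "complex^'n^'n"
  assumes "pos_def A" "pos_def B" "0 \<le> a" "0 \<le> b" "0 < a + b"
  shows "pos_def (a *\<^sub>R A + b *\<^sub>R B)"
  unfolding pos_def_def
proof safe
  show "hermitian_mat (a *\<^sub>R A + b *\<^sub>R B)"
    using assms(1,2) by (simp add: pos_def_def hermitian_mat_def cadjoint_add cadjoint_scaleR)
  fix x :: "complex^'n" assume x: "x \<noteq> 0"
  have qa: "0 < Re (qform A x)" and qb: "0 < Re (qform B x)"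
    using assms(1,2) x by (auto simp: pos_def_def)
  have "Re (qform (a *\<^sub>R A + b *\<^sub>R B) x) = a * Re (qform A x) + b * Re (qform B x)"
    by (simp add: qform_add qform_scaleR)
  also have "\<dots> > 0"
  proof (cases "a = 0")
    case True then show ?thesis using assms qb by simp
  next
    case False then have "a > 0" using assms by simp
    then show ?thesis using qa qb assms by (simp add: add_pos_nonneg)
  qed
  finally show "0 < Re (qform (a *\<^sub>R A + b *\<^sub>R B) x)" .
qed

definition ortho_eig :: "complex^'n^'n \<Rightarrow> (complex^'n) set \<Rightarrow> bool" where
  "ortho_eig H S \<longleftrightarrow> finite S \<and> (\<forall>u\<in>S. cinner u u = 1) \<and>
     (\<forall>u\<in>S. \<forall>w\<in>S. u \<noteq> w \<longrightarrow> cinner u w = 0) \<and> (\<forall>u\<in>S. \<exists>l::real. H *v u = l *\<^sub>R u)"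

lemma continuous_cinner: "continuous_on A (\<lambda>x. cinner u x)"
  unfolding cinner_def by (intro continuous_intros)

lemma continuous_qform: "continuous_on A (\<lambda>x. Re (qform H x))"
  unfolding qform_def matrix_vector_mult_def by (simp, intro continuous_intros)

lemma cinner_norm: "cinner x x = of_real ((norm x)^2)"
  by (simp add: cinner_self_real power2_norm_eq_inner)

lemma exists_orth:
  fixes S :: "(complex^'n) set"
  assumes "finite S" "card S < CARD('n)"
  shows "\<exists>x. x \<noteq> 0 \<and> (\<forall>u\<in>S. cinner u x = 0)"
proof -
  define T where "T = S \<union> (\<lambda>u. \<i> *s u) ` S"
  have fT: "finite T" using assms(1) by (simp add: T_def)
  have "card T \<le> card S + card S"
    unfolding T_def by (metis card_Un_le card_image_le[OF assms(1)] add_left_mono order_trans)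
  then have "dim T < DIM(complex^'n)" using dim_le_card[OF span_superset fT] assms(2) by simp
  then obtain x :: "complex^'n" where x: "x \<noteq> 0" "\<And>y. y \<in> span T \<Longrightarrow> orthogonal x y"
    using orthogonal_to_subspace_exists by blast
  have "cinner u x = 0" if u: "u \<in> S" for u
  proof -
    have "inner x u = 0" using x(2)[OF span_base] u by (auto simp: T_def orthogonal_def)
    then have 1: "Re (cinner u x) = 0" by (simp add: cinner_re_inner inner_commute)
    have "inner x (\<i> *s u) = 0" using x(2)[OF span_base] u by (auto simp: T_def orthogonal_def)
    then have "Re (cinner (\<i> *s u) x) = 0" by (simp add: cinner_re_inner inner_commute)
    then have 2: "Im (cinner u x) = 0" by (simp add: cinner_smult_left)
    show ?thesis using 1 2 by (simp add: complex_eq_iff)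
  qed
  then show ?thesis using x(1) by blast
qed

lemma mv_scaleR: "(H::complex^'n^'m) *v ((c::real) *\<^sub>R x) = c *\<^sub>R (H *v x)"
  by (simp add: vec_eq_iff matrix_vector_mult_def scaleR_sum_right mult.left_commute)

lemma mscaleR_mv: "((c::real) *\<^sub>R (A::complex^'n^'m)) *v x = c *\<^sub>R (A *v x)"
  by (simp add: vec_eq_iff matrix_vector_mult_def scaleR_sum_right)

lemma qform_scale_vec: "qform H ((c::real) *\<^sub>R x) = of_real (c^2) * qform H x"
proof -
  have "H *v (c *\<^sub>R x) = c *\<^sub>R (H *v x)" by (simp add: mv_scaleR)
  then show ?thesis by (simp add: qform_cinner cinner_scaleR_left cinner_scaleR_right power2_eq_square)
qed

lemma eig_step:
  fixes H :: "complex^'n^'n"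
  assumes h: "hermitian_mat H" and S: "ortho_eig H S" and c: "card S < CARD('n)"
  shows "\<exists>v. v \<notin> S \<and> ortho_eig H (insert v S)"
proof -
  define W where "W = {x. \<forall>u\<in>S. cinner u x = 0}"
  have fS: "finite S" using S by (simp add: ortho_eig_def)
  obtain x0 where x0: "x0 \<noteq> 0" "x0 \<in> W" using exists_orth[OF fS c] by (auto simp: W_def)
  define K0 where "K0 = W \<inter> sphere 0 1"
  have cW: "closed W"
    unfolding W_def Ball_def by (intro closed_Collect_all closed_Collect_imp closed_Collect_eq continuous_cinner) auto
  have cK: "compact K0" unfolding K0_def using compact_Int_closed[OF compact_sphere cW] by (simp add: Int_commute)
  have "(1 / norm x0) *\<^sub>R x0 \<in> K0" using x0 by (auto simp: K0_def W_def cinner_scaleR_right)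
  then have ne: "K0 \<noteq> {}" by blast
  obtain v where v: "v \<in> K0" and vmax: "\<And>y. y \<in> K0 \<Longrightarrow> Re (qform H y) \<le> Re (qform H v)"
    using continuous_attains_sup[OF cK ne continuous_qform[of K0 H]] by blast
  define l where "l = Re (qform H v)"
  have vW: "v \<in> W" and vn: "norm v = 1" using v by (auto simp: K0_def)
  have vv: "cinner v v = 1" using vn by (simp add: cinner_norm)
  have bound: "Re (qform H x) \<le> l * (norm x)^2" if x: "x \<in> W" for x
  proof (cases "x = 0")
    case True then show ?thesis by simp
  next
    case False
    have "(1 / norm x) *\<^sub>R x \<in> K0" using x False by (auto simp: K0_def W_def cinner_scaleR_right)
    then have "Re (qform H ((1 / norm x) *\<^sub>R x)) \<le> l" using vmax l_def by blast
    then have "(1 / norm x)^2 * Re (qform H x) \<le> l" by (simp add: qform_scale_vec)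
    then show ?thesis using False by (simp add: field_simps power2_eq_square)
  qed
  define K where "K = H - l *\<^sub>R mat 1"
  have Kv: "K *v y = H *v y - l *\<^sub>R y" for y
    by (simp add: K_def matrix_vector_mult_diff_rdistrib mscaleR_mv)
  have hK: "hermitian_mat K"
    using h by (simp add: K_def hermitian_mat_def cadjoint_diff cadjoint_scaleR)
  have qK: "Re (qform K y) = Re (qform H y) - l * (norm y)^2" for y
    by (simp add: qform_cinner Kv cinner_diff_right cinner_scaleR_right cinner_norm)
  have Kv_W: "K *v v \<in> W"
    unfolding W_def
  proof safe
    fix u assume u: "u \<in> S"
    then obtain lu :: real where lu: "H *v u = lu *\<^sub>R u" using S u unfolding ortho_eig_def by blast
    have uv: "cinner u v = 0" using vW u by (simp add: W_def)
    have "cinner u (H *v v) = cinner (H *v u) v" using hermitian_cinner[OF h] .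
    also have "\<dots> = 0" by (simp add: lu cinner_scaleR_left uv)
    finally show "cinner u (K *v v) = 0" by (simp add: Kv cinner_diff_right cinner_scaleR_right uv)
  qed
  have "cinner (K *v v) (K *v v) = 0"
  proof (rule herm_max_zero[OF hK vW])
    show "x + of_real s *s y \<in> W" if "x \<in> W" "y \<in> W" for x y s
      using that by (simp add: W_def cinner_add_right cinner_smult_right)
    show "\<i> *s y \<in> W" if "y \<in> W" for y
      using that by (simp add: W_def cinner_smult_right)
    show "Re (qform K x) \<le> 0" if "x \<in> W" for x using bound[OF that] qK[of x] by simp
    show "Re (qform K v) = 0" using qK[of v] vn l_def by simp
    show "K *v v \<in> W" by (rule Kv_W)
  qed
  then have "K *v v = 0" by (simp add: cinner_self_eq0)
  then have ev: "H *v v = l *\<^sub>R v" by (simp add: Kv)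
  have vS: "v \<notin> S"
  proof
    assume "v \<in> S" then have "cinner v v = 0" using vW by (simp add: W_def)
    then show False using vv by simp
  qed
  have "ortho_eig H (insert v S)"
    unfolding ortho_eig_def
  proof (intro conjI ballI impI)
    show "finite (insert v S)" using fS by simp
    fix u assume "u \<in> insert v S"
    then show "cinner u u = 1" using vv S by (auto simp: ortho_eig_def)
  next
    fix u w assume u: "u \<in> insert v S" and w: "w \<in> insert v S" and uw: "u \<noteq> w"
    show "cinner u w = 0"
    proof -
      { assume "u = v" "w \<in> S"
        then have ?thesis using vW by (metis (mono_tags, lifting) W_def cinner_cnj complex_cnj_zero mem_Collect_eq) }
      moreover
      { assume "w = v" "u \<in> S" then have ?thesis using vW by (simp add: W_def) }
      moreover
      { assume "u \<in> S" "w \<in> S" then have ?thesis using S uw by (simp add: ortho_eig_def) }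
      ultimately show ?thesis using u w uw by auto
    qed
  next
    fix u assume "u \<in> insert v S"
    then show "\<exists>l::real. H *v u = l *\<^sub>R u" using ev S by (auto simp: ortho_eig_def)
  qed
  then show ?thesis using vS by blast
qed

lemma eig_exists:
  fixes H :: "complex^'n^'n"
  assumes h: "hermitian_mat H"
  shows "k \<le> CARD('n) \<Longrightarrow> \<exists>S. ortho_eig H S \<and> card S = k"
proof (induction k)
  case 0
  show ?case by (rule exI[of _ "{}"]) (simp add: ortho_eig_def)
next
  case (Suc k)
  then obtain S where S: "ortho_eig H S" "card S = k" by auto
  then obtain v where "v \<notin> S" "ortho_eig H (insert v S)" using eig_step[OF h S(1)] Suc.prems by auto
  then show ?case using S by (metis card_insert_disjoint ortho_eig_def)
qed

definition rdiag :: "('n \<Rightarrow> real) \<Rightarrow> complex^'n^'n" where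
  "rdiag d = (\<chi> i j. if i = j then of_real (d i) else 0)"

lemma spectral:
  fixes H :: "complex^'n^'n"
  assumes h: "hermitian_mat H"
  shows "\<exists>U d. cadjoint U ** U = mat 1 \<and> U ** cadjoint U = mat 1 \<and> H = U ** rdiag d ** cadjoint U"
proof -
  obtain S where S: "ortho_eig H S" "card S = CARD('n)" using eig_exists[OF h] by blast
  have fS: "finite S" using S by (simp add: ortho_eig_def)
  obtain e where e: "bij_betw e (UNIV::'n set) S"
    using finite_same_card_bij[of "UNIV::'n set" S] fS S(2) by auto
  have eS: "e j \<in> S" for j using e by (auto simp: bij_betw_def)
  have einj: "e j = e k \<Longrightarrow> j = k" for j k using e by (auto simp: bij_betw_def inj_def)
  define U :: "complex^'n^'n" where "U = (\<chi> i j. e j $ i)"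
  define d where "d j = (SOME l. H *v e j = l *\<^sub>R e j)" for j
  have d: "H *v e j = d j *\<^sub>R e j" for j
  proof -
    have "\<exists>l. H *v e j = l *\<^sub>R e j" using S(1) eS by (auto simp: ortho_eig_def)
    then show ?thesis unfolding d_def by (rule someI_ex)
  qed
  have ee: "cinner (e j) (e k) = (if j = k then 1 else 0)" for j k
    using S(1) eS einj unfolding ortho_eig_def by (cases "j = k") (simp, metis)
  have UU: "cadjoint U ** U = mat 1"
  proof -
    have "(cadjoint U ** U) $ j $ k = cinner (e j) (e k)" for j k
      by (simp add: U_def cadjoint_def matrix_matrix_mult_def cinner_def)
    then show ?thesis by (simp add: vec_eq_iff ee mat_def)
  qed
  then have UU': "U ** cadjoint U = mat 1" using matrix_left_right_inverse by blast
  have HU: "H ** U = U ** rdiag d"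
  proof -
    have "(H ** U) $ i $ j = (H *v e j) $ i" for i j
      by (simp add: U_def matrix_matrix_mult_def matrix_vector_mult_def)
    moreover have "(U ** rdiag d) $ i $ j = of_real (d j) * e j $ i" for i j
      by (simp add: U_def rdiag_def matrix_matrix_mult_def if_distrib mult.commute cong: if_cong)
    ultimately show ?thesis by (simp add: vec_eq_iff d del: vector_scaleR_component)
  qed
  have "H = H ** U ** cadjoint U" by (simp add: UU' flip: matrix_mul_assoc)
  also have "\<dots> = U ** rdiag d ** cadjoint U" by (simp add: HU)
  finally show ?thesis using UU UU' by blast
qed

lemma sum_ifL: "(\<Sum>j\<in>UNIV. (if (i::'n::finite) = j then c else 0) * f j) = c * (f i :: complex)"
proof -
  have "(\<Sum>j\<in>UNIV. (if i = j then c else 0) * f j) = (\<Sum>j\<in>UNIV. if j = i then c * f i else 0)"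
    by (rule sum.cong) auto
  then show ?thesis by simp
qed

lemma rdiag_mult: "rdiag a ** rdiag b = rdiag (\<lambda>i. a i * b i)"
  by (simp only: vec_eq_iff rdiag_def matrix_matrix_mult_def vec_lambda_beta sum_ifL) auto

lemma cadjoint_rdiag: "cadjoint (rdiag d) = rdiag d"
  by (simp add: rdiag_def cadjoint_def vec_eq_iff)

lemma rdiag_axis: "rdiag d *v axis j 1 = d j *\<^sub>R axis j 1"
  by (simp only: vec_eq_iff rdiag_def matrix_vector_mult_def vec_lambda_beta sum_ifL vscaleR_nth)
    (auto simp: axis_def)

lemma qform_rdiag: "qform (rdiag d) y = (\<Sum>i\<in>UNIV. of_real (d i) * (cnj (y$i) * y$i))"
  by (simp only: qform_def rdiag_def matrix_vector_mult_def vec_lambda_beta sum_ifL) (simp add: mult.left_commute)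

lemma psd_rdiag:
  assumes "\<And>i. d i \<ge> 0"
  shows "pos_semidef (rdiag d)"
  unfolding pos_semidef_def
proof safe
  show "hermitian_mat (rdiag d)" by (simp add: hermitian_mat_def cadjoint_rdiag)
  fix x :: "complex^'a"
  have "Re (qform (rdiag d) x) = (\<Sum>i\<in>UNIV. d i * ((Re (x$i))^2 + (Im (x$i))^2))"
    by (simp add: qform_rdiag Re_sum power2_eq_square algebra_simps)
  also have "\<dots> \<ge> 0" using assms by (intro sum_nonneg mult_nonneg_nonneg) auto
  finally show "0 \<le> Re (qform (rdiag d) x)" .
qed

lemma unitary_cong:
  fixes U :: "complex^'n^'n"
  assumes "cadjoint U ** U = mat 1"
  shows "cadjoint U ** (U ** X ** cadjoint U) ** U = X"
  by (simp add: matrix_mul_assoc) (simp add: assms flip: matrix_mul_assoc)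

lemma psd_sqrt_exists:
  fixes A :: "complex^'n^'n"
  assumes A: "pos_semidef A"
  shows "\<exists>B. pos_semidef B \<and> B ** B = A"
proof -
  obtain U d where U: "cadjoint U ** U = mat 1" "U ** cadjoint U = mat 1"
    and Ad: "A = U ** rdiag d ** cadjoint U"
    using spectral[of A] A by (auto simp: pos_semidef_def)
  have dnn: "d j \<ge> 0" for j
  proof -
    have "qform A (U *v axis j 1) = qform (cadjoint U ** A ** U) (axis j 1)" by (simp add: qform_cong)
    also have "\<dots> = qform (rdiag d) (axis j 1)" using unitary_cong[OF U(1)] Ad by simp
    also have "\<dots> = of_real (d j)"
    proof -
      have "\<And>i. of_real (d i) * (cnj (axis j 1 $ i) * axis j 1 $ i) = (if i = j then of_real (d j) else (0::complex))"
        by (simp add: axis_def)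
      then show ?thesis by (simp add: qform_rdiag)
    qed
    finally show ?thesis using A by (metis Re_complex_of_real pos_semidef_def)
  qed
  define B where "B = U ** rdiag (\<lambda>j. sqrt (d j)) ** cadjoint U"
  have "B ** B = U ** (rdiag (\<lambda>j. sqrt (d j)) ** (cadjoint U ** U) ** rdiag (\<lambda>j. sqrt (d j))) ** cadjoint U"
    by (simp add: B_def matrix_mul_assoc)
  also have "\<dots> = U ** rdiag d ** cadjoint U" using dnn by (simp add: U rdiag_mult)
  finally have BB: "B ** B = A" using Ad by simp
  have "pos_semidef (cadjoint (cadjoint U) ** rdiag (\<lambda>j. sqrt (d j)) ** cadjoint U)"
    by (rule cong_psd, rule psd_rdiag) (simp add: dnn)
  then have "pos_semidef B" by (simp add: B_def)
  then show ?thesis using BB by blast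
qed

lemma psd_sqrt_unique:
  fixes B C :: "complex^'n^'n"
  assumes B: "pos_semidef B" and C: "pos_semidef C" and BC: "B ** B = C ** C"
  shows "B = C"
proof (rule ccontr)
  assume ne: "B \<noteq> C"
  define D where "D = B - C"
  have hD: "hermitian_mat D" using B C by (simp add: D_def pos_semidef_def hermitian_mat_def cadjoint_diff)
  obtain U d where U: "cadjoint U ** U = mat 1" "U ** cadjoint U = mat 1"
    and Dd: "D = U ** rdiag d ** cadjoint U"
    using spectral[OF hD] by blast
  have "\<exists>j. d j \<noteq> 0"
  proof (rule ccontr)
    assume "\<not> (\<exists>j. d j \<noteq> 0)"
    then have "rdiag d = 0" by (simp add: rdiag_def vec_eq_iff)
    then have "D = 0" using Dd by simp
    then show False using ne by (simp add: D_def)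
  qed
  then obtain j where dj: "d j \<noteq> 0" by blast
  define u where "u = U *v axis j 1"
  have "cadjoint U *v u = axis j 1" by (simp add: u_def matrix_vector_mul_assoc U)
  then have u0: "u \<noteq> 0" by (metis axis_eq_0_iff matrix_vector_mult_0_right one_neq_zero)
  have Du: "D *v u = d j *\<^sub>R u"
  proof -
    have "D *v u = U *v (rdiag d *v ((cadjoint U ** U) *v axis j 1))"
      by (simp add: Dd u_def matrix_vector_mul_assoc matrix_mul_assoc)
    also have "\<dots> = d j *\<^sub>R u" by (simp add: U rdiag_axis mv_scaleR u_def)
    finally show ?thesis .
  qed
  have "B *v (B *v u) - C *v (C *v u) = 0"
    using BC by (simp add: matrix_vector_mul_assoc)
  moreover have "B *v (B *v u) - C *v (C *v u) = D *v (B *v u) + C *v (D *v u)"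
    by (simp add: D_def matrix_vector_mult_diff_rdistrib matrix_vector_mult_diff_distrib)
  ultimately have "cinner u (D *v (B *v u)) + cinner u (C *v (D *v u)) = 0"
    by (metis cinner_add_right cinner_zero_right)
  moreover have "cinner u (D *v (B *v u)) = of_real (d j) * qform B u"
    using hermitian_cinner[OF hD, of u "B *v u"] by (simp add: Du cinner_scaleR_left qform_cinner)
  moreover have "cinner u (C *v (D *v u)) = of_real (d j) * qform C u"
    by (simp add: Du mv_scaleR cinner_scaleR_right qform_cinner)
  ultimately have "of_real (d j) * (qform B u + qform C u) = 0" by (simp add: algebra_simps)
  then have "qform B u + qform C u = 0" using dj by simp
  then have "Re (qform B u) + Re (qform C u) = 0" by (metis plus_complex.sel(1) zero_complex.sel(1))
  moreover have "Re (qform B u) \<ge> 0" "Re (qform C u) \<ge> 0" using B C by (auto simp: pos_semidef_def)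
  ultimately have "Re (qform B u) = 0" "Re (qform C u) = 0" by linarith+
  then have "B *v u = 0" "C *v u = 0" using psd_kernel B C by blast+
  then have "D *v u = 0" by (simp add: D_def matrix_vector_mult_diff_rdistrib)
  then have "d j *\<^sub>R u = 0" using Du by simp
  then show False using dj u0 by simp
qed

lemma msqrt:
  fixes A :: "complex^'n^'n"
  assumes "pos_semidef A"
  shows "pos_semidef (msqrt A)" "msqrt A ** msqrt A = A"
proof -
  have "\<exists>!B. pos_semidef B \<and> B ** B = A"
    using psd_sqrt_exists[OF assms] psd_sqrt_unique by metis
  then have "pos_semidef (msqrt A) \<and> msqrt A ** msqrt A = A"
    unfolding msqrt_def by (rule theI')
  then show "pos_semidef (msqrt A)" "msqrt A ** msqrt A = A" by auto
qed

lemma msqrt_unique: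
  fixes A B :: "complex^'n^'n"
  assumes "pos_semidef B" "B ** B = A"
  shows "msqrt A = B"
proof -
  have A: "pos_semidef A"
  proof -
    have "pos_semidef (cadjoint B ** mat 1 ** B)" by (rule cong_psd[OF pd_psd[OF pd_mat1]])
    then show ?thesis using assms by (simp add: pos_semidef_def hermitian_mat_def)
  qed
  show ?thesis using msqrt[OF A] assms psd_sqrt_unique by metis
qed

lemma msqrt_pd:
  fixes A :: "complex^'n^'n"
  assumes A: "pos_def A"
  shows "pos_def (msqrt A)"
proof -
  have ps: "pos_semidef (msqrt A)" "msqrt A ** msqrt A = A" using msqrt[OF pd_psd[OF A]] by auto
  show ?thesis unfolding pos_def_def
  proof safe
    show "hermitian_mat (msqrt A)" using ps by (simp add: pos_semidef_def)
    fix x :: "complex^'n" assume x: "x \<noteq> 0"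
    show "0 < Re (qform (msqrt A) x)"
    proof (rule ccontr)
      assume "\<not> 0 < Re (qform (msqrt A) x)"
      then have "Re (qform (msqrt A) x) = 0" using ps by (simp add: pos_semidef_def not_less order_antisym)
      then have "msqrt A *v x = 0" using psd_kernel ps by blast
      then have "A *v x = 0" using ps by (metis matrix_vector_mul_assoc matrix_vector_mult_0_right)
      then show False using pd_inj[OF A] x by blast
    qed
  qed
qed

lemma mat_add_rdistrib: "((A::complex^'n^'m) + B) ** C = A ** C + B ** C"
  by (vector matrix_matrix_mult_def sum.distrib[symmetric] field_simps)

lemma mat_scaleR_left: "((c::real) *\<^sub>R (A::complex^'n^'m)) ** B = c *\<^sub>R (A ** B)"
  by (simp add: scalar_matrix_assoc)

lemma mat_scaleR_right: "(A::complex^'n^'m) ** ((c::real) *\<^sub>R B) = c *\<^sub>R (A ** B)"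
  by (simp add: matrix_scalar_ac scalar_matrix_assoc)

lemma pd_herm: "pos_def A \<Longrightarrow> cadjoint A = A"
  by (simp add: pos_def_def hermitian_mat_def)

lemma cancel3: "(A::complex^'n^'n) ** B = mat 1 \<Longrightarrow> A ** (B ** C) = C"
  by (simp add: matrix_mul_assoc)

theorem mainTheorem4:
  fixes P Q :: "complex^'n^'n" and t :: real
  assumes "pos_def P" and "pos_def Q" and "0 \<le> t" and "t \<le> 1"
  shows "gen_fidelity (bw_geodesic P Q t) P Q = uhlmann_fidelity P Q"
proof -
  note PP = assms(1) and QQ = assms(2)
  have iP: "invertible P" by (rule pd_invertible[OF PP])
  define Pi where "Pi = matrix_inv P"
  have Pi: "pos_def Pi" unfolding Pi_def by (rule pd_inv[OF PP])
  have PiP: "Pi ** P = mat 1" using inv_props[OF iP] by (simp add: Pi_def)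
  define A where "A = msqrt Pi"
  have A: "pos_def A" unfolding A_def by (rule msqrt_pd[OF Pi])
  have AA: "A ** A = Pi" unfolding A_def using msqrt[OF pd_psd[OF Pi]] by simp
  have iA: "invertible A" by (rule pd_invertible[OF A])
  define Ai where "Ai = matrix_inv A"
  have Ai: "pos_def Ai" unfolding Ai_def by (rule pd_inv[OF A])
  have AAi: "A ** Ai = mat 1" "Ai ** A = mat 1" using inv_props[OF iA] by (auto simp: Ai_def)
  define Z where "Z = Ai ** Q ** Ai"
  have Z: "pos_def Z"
    using cong_pd[OF QQ pd_invertible[OF Ai]] by (simp add: Z_def pd_herm[OF Ai])
  define X where "X = msqrt Z"
  have X: "pos_def X" unfolding X_def by (rule msqrt_pd[OF Z])
  have XX: "X ** X = Z" unfolding X_def using msqrt[OF pd_psd[OF Z]] by simp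
  define G where "G = A ** X ** A"
  have G: "pos_def G"
    using cong_pd[OF X iA] by (simp add: G_def pd_herm[OF A])
  have gm: "gmean (matrix_inv P) Q = G"
    by (simp add: gmean_def G_def X_def Z_def Ai_def A_def Pi_def)
  have "A ** (A ** P) = mat 1" using AA PiP by (simp add: matrix_mul_assoc)
  then have "Ai = A ** P" using inv_unique by (metis Ai_def)
  then have APA: "A ** (P ** A) = mat 1" using AAi(2) by (simp add: matrix_mul_assoc)
  have APA3: "A ** (P ** (A ** C)) = C" for C
    using APA by (metis matrix_mul_assoc matrix_mul_lid)
  have GPG: "G ** (P ** G) = Q"
  proof -
    have "G ** (P ** G) = A ** (X ** ((A ** (P ** A)) ** (X ** A)))"
      by (simp add: G_def matrix_mul_assoc)
    also have "\<dots> = A ** ((X ** X) ** A)" by (simp add: APA3 matrix_mul_assoc[symmetric])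
    also have "\<dots> = (A ** Ai) ** Q ** (Ai ** A)" by (simp add: XX Z_def matrix_mul_assoc)
    also have "\<dots> = Q" by (simp add: AAi)
    finally show ?thesis .
  qed
  define M where "M = (1 - t) *\<^sub>R mat 1 + t *\<^sub>R G"
  have M: "pos_def M" unfolding M_def using pd_comb[OF pd_mat1 G] assms(3,4) by simp
  have iM: "invertible M" by (rule pd_invertible[OF M])
  define Mi where "Mi = matrix_inv M"
  have Mi: "pos_def Mi" unfolding Mi_def by (rule pd_inv[OF M])
  have MMi: "M ** Mi = mat 1" "Mi ** M = mat 1" using inv_props[OF iM] by (auto simp: Mi_def)
  have MG: "M ** G = G ** M"
    by (simp add: M_def mat_add_rdistrib matrix_add_ldistrib mat_scaleR_left mat_scaleR_right)
  have iG: "invertible G" by (rule pd_invertible[OF G])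
  define Gi where "Gi = matrix_inv G"
  have GGi: "G ** Gi = mat 1" "Gi ** G = mat 1" using inv_props[OF iG] by (auto simp: Gi_def)
  define Nt where "Nt = (1 - t) *\<^sub>R Gi + t *\<^sub>R mat 1"
  have Nt: "pos_def Nt" unfolding Nt_def using pd_comb[OF pd_inv[OF G] pd_mat1] assms(3,4)
    by (simp add: Gi_def)
  have GiM: "Gi ** M = Nt"
    by (simp add: M_def Nt_def matrix_add_ldistrib mat_scaleR_right GGi)
  define N where "N = Mi ** G"
  have "Nt ** N = mat 1"
    by (simp add: N_def flip: GiM) (simp add: matrix_mul_assoc[symmetric] cancel3[OF MMi(1)] GGi)
  then have "matrix_inv Nt = N" by (rule inv_unique)
  then have N: "pos_def N" using pd_inv[OF Nt] by simp
  define R where "R = M ** P ** M"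
  have bw: "bw_geodesic P Q t = R"
    by (simp add: bw_geodesic_def gm M_def R_def Let_def)
  have R: "pos_def R" using cong_pd[OF PP iM] by (simp add: R_def pd_herm[OF M])
  define S where "S = msqrt R"
  have S: "pos_def S" unfolding S_def by (rule msqrt_pd[OF R])
  have SS: "S ** S = R" unfolding S_def using msqrt[OF pd_psd[OF R]] by simp
  have iS: "invertible S" by (rule pd_invertible[OF S])
  define Si where "Si = matrix_inv S"
  have SSi: "S ** Si = mat 1" "Si ** S = mat 1" using inv_props[OF iS] by (auto simp: Si_def)
  have Ri: "matrix_inv R = Si ** Si"
    by (rule inv_unique) (simp add: SS[symmetric] matrix_mul_assoc[symmetric] cancel3[OF SSi(1)] SSi)
  have sq1: "msqrt (S ** P ** S) = S ** Mi ** S"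
  proof (rule msqrt_unique)
    show "pos_semidef (S ** Mi ** S)"
      using cong_psd[OF pd_psd[OF Mi], of S] by (simp add: pd_herm[OF S])
    have "(S ** Mi ** S) ** (S ** Mi ** S) = S ** (Mi ** ((S ** S) ** (Mi ** S)))"
      by (simp add: matrix_mul_assoc)
    also have "\<dots> = S ** (Mi ** (M ** (P ** (M ** (Mi ** S)))))"
      by (simp add: SS R_def matrix_mul_assoc)
    also have "\<dots> = S ** P ** S" by (simp add: cancel3[OF MMi(2)] cancel3[OF MMi(1)] matrix_mul_assoc[symmetric])
    finally show "(S ** Mi ** S) ** (S ** Mi ** S) = S ** P ** S" .
  qed
  have NRN: "N ** R ** N = Q"
  proof -
    have "N ** R ** N = Mi ** ((G ** M) ** (P ** ((M ** Mi) ** G)))"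
      by (simp add: N_def R_def matrix_mul_assoc)
    also have "\<dots> = G ** (P ** G)"
      by (simp add: MG[symmetric] MMi matrix_mul_assoc[symmetric] cancel3[OF MMi(2)])
    finally show ?thesis using GPG by simp
  qed
  have sq2: "msqrt (S ** Q ** S) = S ** N ** S"
  proof (rule msqrt_unique)
    show "pos_semidef (S ** N ** S)"
      using cong_psd[OF pd_psd[OF N], of S] by (simp add: pd_herm[OF S])
    have "(S ** N ** S) ** (S ** N ** S) = S ** (N ** R ** N) ** S"
      by (simp add: SS[symmetric] matrix_mul_assoc)
    then show "(S ** N ** S) ** (S ** N ** S) = S ** Q ** S" by (simp add: NRN)
  qed
  have "gen_fidelity R P Q = trace ((S ** Mi ** S) ** (Si ** Si) ** (S ** N ** S))"
    by (simp add: gen_fidelity_def S_def[symmetric] sq1 sq2 Ri)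
  also have "\<dots> = trace (S ** (Mi ** (N ** S)))"
    by (simp add: matrix_mul_assoc[symmetric] cancel3[OF SSi(1)] cancel3[OF SSi(2)])
  also have "\<dots> = trace ((Mi ** (N ** S)) ** S)" by (rule trace_mul_sym)
  also have "\<dots> = trace ((Mi ** Mi ** G ** M ** P) ** M)"
    by (simp add: matrix_mul_assoc[symmetric] SS N_def R_def)
  also have "\<dots> = trace (M ** (Mi ** Mi ** G ** M ** P))" by (rule trace_mul_sym)
  also have "\<dots> = trace (Mi ** (M ** G) ** P)"
    by (simp add: matrix_mul_assoc[symmetric] cancel3[OF MMi(1)] MG)
  also have "\<dots> = trace (G ** P)"
    by (simp add: matrix_mul_assoc[symmetric] cancel3[OF MMi(2)])
  finally have lhs: "gen_fidelity R P Q = trace (G ** P)" .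
  define T where "T = msqrt P"
  have T: "pos_semidef T" "T ** T = P" unfolding T_def using msqrt[OF pd_psd[OF PP]] by auto
  have hT: "cadjoint T = T" using T by (simp add: pos_semidef_def hermitian_mat_def)
  have sq3: "msqrt (T ** Q ** T) = T ** G ** T"
  proof (rule msqrt_unique)
    show "pos_semidef (T ** G ** T)"
      using cong_psd[OF pd_psd[OF G], of T] by (simp add: hT)
    have "(T ** G ** T) ** (T ** G ** T) = T ** (G ** (P ** G)) ** T"
      by (simp add: T(2)[symmetric] matrix_mul_assoc)
    then show "(T ** G ** T) ** (T ** G ** T) = T ** Q ** T" by (simp add: GPG)
  qed
  have "uhlmann_fidelity P Q = trace (T ** (G ** T))"
    by (simp add: uhlmann_fidelity_def T_def[symmetric] sq3 matrix_mul_assoc)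
  also have "\<dots> = trace ((G ** T) ** T)" by (rule trace_mul_sym)
  also have "\<dots> = trace (G ** P)" by (simp add: T(2) flip: matrix_mul_assoc)
  finally show ?thesis using lhs bw by simp
qed

end
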